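(* Let $\mathcal{P}$ be a finite poset and $f\colon\mathcal{P}\to\{0,1\}$ be $\varepsilon$-far from $k$-monotone. Then the violation hypergraph of $f$ contains a matching of $(k+1)$-uniform hyperedges of size at least $\frac{\varepsilon|\mathcal{P}|}{k+1}$.
   Context: $f\colon\mathcal{P}\to\{0,1\}$ is $k$-monotone if there is no chain $x_1\prec x_2\prec\cdots\prec x_{k+1}$ in $\mathcal{P}$ with $f(x_1)=1$ and $f(x_i)\neq f(x_{i+1})$ for all $i\in[k]$; such a chain is a violation to $k$-monotonicity. $f$ is $\varepsilon$-far from $k$-monotone if the fraction of points on which $f$ differs from any $k$-monotone function is at least $\varepsilon$. The violation hypergraph of $f$ has vertex set $\mathcal{P}$ and a hyperedge $\{x_1,\dots,x_{k+1}\}$ for every violation $x_1\prec\cdots\prec x_{k+1}$. A matching is a set of pairwise disjoint hyperedges. *)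

theory Defs
  imports Main "HOL-Library.Disjoint_Sets" Complex_Main
begin

text \<open>A finite poset is modelled as a finite carrier set P of a type with a partial order;
  Boolean functions P -> {0,1} are modelled as functions to bool (True = 1).
  Only values of functions on P matter.\<close>

definition is_violation :: "'a::order set \<Rightarrow> nat \<Rightarrow> ('a \<Rightarrow> bool) \<Rightarrow> 'a list \<Rightarrow> bool" where
  "is_violation P k f xs \<longleftrightarrow>
     length xs = k + 1 \<and> set xs \<subseteq> P \<and> sorted_wrt (<) xs \<and>
     f (xs ! 0) \<and> (\<forall>i<k. f (xs ! i) \<noteq> f (xs ! (i + 1)))"

definition k_monotone :: "'a::order set \<Rightarrow> nat \<Rightarrow> ('a \<Rightarrow> bool) \<Rightarrow> bool" where
  "k_monotone P k f \<longleftrightarrow> \<not> (\<exists>xs. is_violation P k f xs)"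

definition eps_far :: "'a::order set \<Rightarrow> nat \<Rightarrow> real \<Rightarrow> ('a \<Rightarrow> bool) \<Rightarrow> bool" where
  "eps_far P k \<epsilon> f \<longleftrightarrow>
     (\<forall>g. k_monotone P k g \<longrightarrow> real (card {x\<in>P. f x \<noteq> g x}) / real (card P) \<ge> \<epsilon>)"

definition violation_edges :: "'a::order set \<Rightarrow> nat \<Rightarrow> ('a \<Rightarrow> bool) \<Rightarrow> 'a set set" where
  "violation_edges P k f = {set xs | xs. is_violation P k f xs}"

definition is_matching :: "'a set set \<Rightarrow> 'a set set \<Rightarrow> bool" where
  "is_matching E M \<longleftrightarrow> M \<subseteq> E \<and> disjoint M"

end

theory Submission
  imports Defs
begin

lemma sw_distinct: "sorted_wrt (<) (xs::'a::order list) \<Longrightarrow> distinct xs"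
  by (induction xs) auto

lemma aux_notin: "A \<subseteq> P - \<Union>M \<Longrightarrow> A \<noteq> {} \<Longrightarrow> A \<notin> M" by blast

lemma extension:
  fixes S P :: "'a::order set" and f :: "'a \<Rightarrow> bool"
  assumes finS: "finite S" and SP: "S \<subseteq> P"
    and noviol: "\<And>xs. is_violation P k f xs \<Longrightarrow> \<not> set xs \<subseteq> S"
  shows "\<exists>g. k_monotone P k g \<and> (\<forall>x\<in>S. g x = f x)"
proof -
  define altc where "altc ys \<longleftrightarrow> set ys \<subseteq> S \<and> sorted_wrt (<) ys \<and> (\<forall>i<length ys. f (ys!i) = even i)" for ys
  define L where "L x = {length ys | ys. altc ys \<and> (\<forall>y\<in>set ys. y \<le> x)}" for x
  define a where "a x = Max (L x)" for x
  have lenb: "length ys \<le> card S" if "altc ys" for ys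
  proof -
    have "distinct ys" using that sw_distinct unfolding altc_def by blast
    then have "length ys = card (set ys)" by (simp add: distinct_card)
    also have "\<dots> \<le> card S" using that finS unfolding altc_def by (simp add: card_mono)
    finally show ?thesis .
  qed
  have finL: "finite (L x)" for x
    by (rule finite_subset[of _ "{..card S}"]) (auto simp: L_def dest: lenb)
  have neL: "0 \<in> L x" for x unfolding L_def altc_def by force
  have A1: "length ys \<le> a x" if "altc ys" "\<forall>y\<in>set ys. y \<le> x" for ys x
    unfolding a_def using finL that by (intro Max_ge) (auto simp: L_def)
  have A2: "\<exists>ys. altc ys \<and> (\<forall>y\<in>set ys. y \<le> x) \<and> length ys = a x" for x
  proof -
    have "a x \<in> L x" unfolding a_def using finL neL by (intro Max_in) auto
    then show ?thesis unfolding L_def by auto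
  qed
  have bound: "a x \<le> k" for x
  proof (rule ccontr)
    assume "\<not> a x \<le> k"
    moreover obtain ys where ys0: "altc ys" "length ys = a x" using A2[of x] by blast
    ultimately have ys: "altc ys" "length ys > k" by auto
    define xs where "xs = take (Suc k) ys"
    have v1: "length xs = k + 1" using ys by (simp add: xs_def)
    have vS: "set xs \<subseteq> S" using ys set_take_subset[of "Suc k" ys] unfolding xs_def altc_def by blast
    then have v2: "set xs \<subseteq> P" using SP by blast
    have v3: "sorted_wrt (<) xs" using ys unfolding xs_def altc_def by (simp add: sorted_wrt_take)
    have "0 < length ys" using ys(2) by linarith
    then have fy0: "f (ys ! 0)" using ys unfolding altc_def by auto
    have "xs ! 0 = ys ! 0" unfolding xs_def by (rule nth_take[OF zero_less_Suc])
    with fy0 have v4: "f (xs ! 0)" by simp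
    have v5: "\<forall>i<k. f (xs ! i) \<noteq> f (xs ! (i + 1))"
    proof (intro allI impI)
      fix i assume "i < k"
      then show "f (xs ! i) \<noteq> f (xs ! (i + 1))" using ys unfolding xs_def altc_def by auto
    qed
    have "is_violation P k f xs" unfolding is_violation_def using v1 v2 v3 v4 v5 by blast
    moreover have "set xs \<subseteq> S" using ys set_take_subset[of "Suc k" ys] unfolding xs_def altc_def by blast
    ultimately show False using noviol by blast
  qed
  have amono: "a x \<le> a x'" if "x \<le> x'" for x x'
  proof -
    obtain ys where "altc ys" "\<forall>y\<in>set ys. y \<le> x" "length ys = a x" using A2 by blast
    then show ?thesis using A1[of ys x'] that order_trans by metis
  qed
  define g where "g x = odd (a x)" for x
  have agree: "g x = f x" if "x \<in> S" for x
  proof -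
    obtain ys where ys: "altc ys" "\<forall>y\<in>set ys. y \<le> x" "length ys = a x" using A2 by blast
    show ?thesis
    proof (cases "ys = []")
      case True
      then have a0: "a x = 0" using ys by simp
      have "\<not> f x"
      proof
        assume "f x"
        then have "altc [x]" using that unfolding altc_def by simp
        then have "1 \<le> a x" using A1[of "[x]" x] by simp
        then show False using a0 by simp
      qed
      then show ?thesis using a0 by (simp add: g_def)
    next
      case False
      define y where "y = last ys"
      have yin: "y \<in> set ys" using False by (simp add: y_def)
      have yx: "y \<le> x" using ys yin by blast
      have ylast: "ys ! (length ys - 1) = y" using False by (simp add: y_def last_conv_nth)
      have "length ys - 1 < length ys" using False by simp
      then have "f (ys ! (length ys - 1)) = even (length ys - 1)" using ys(1) unfolding altc_def by blast
      then have fy1: "f y = even (a x - 1)" using ylast ys(3) by simp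
      have "a x > 0" using False ys(3)[symmetric] by simp
      then have "even (a x - 1) = odd (a x)" by (cases "a x") auto
      with fy1 have fy: "f y = odd (a x)" by simp
      show ?thesis
      proof (cases "f x = f y")
        case True then show ?thesis using fy by (simp add: g_def)
      next
        case ne: False
        then have "y \<noteq> x" by auto
        with yx have yltx: "y < x" by simp
        have allle: "\<forall>z\<in>set ys. z \<le> y"
        proof
          fix z assume "z \<in> set ys"
          then obtain j where j: "j < length ys" "ys ! j = z" by (auto simp: in_set_conv_nth)
          show "z \<le> y"
          proof (cases "j = length ys - 1")
            case True then show ?thesis using j ylast by simp
          next
            case False
            then have "j < length ys - 1" using j by simp
            then have "ys ! j < ys ! (length ys - 1)" using ys(1) unfolding altc_def
              by (simp add: sorted_wrt_iff_nth_less)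
            then show ?thesis using j ylast by simp
          qed
        qed
        have "altc (ys @ [x])" unfolding altc_def
        proof (intro conjI allI impI)
          show "set (ys @ [x]) \<subseteq> S" using ys that unfolding altc_def by auto
          show "sorted_wrt (<) (ys @ [x])" using ys allle yltx unfolding altc_def
            by (auto simp: sorted_wrt_append intro: le_less_trans)
          fix i assume i: "i < length (ys @ [x])"
          show "f ((ys @ [x]) ! i) = even i"
          proof (cases "i < length ys")
            case True then show ?thesis using ys unfolding altc_def by (simp add: nth_append)
          next
            case False
            then have "i = length ys" using i by simp
            then show ?thesis using ne fy ys by (simp add: nth_append)
          qed
        qed
        then have "length (ys @ [x]) \<le> a x" using A1[of "ys @ [x]" x] ys(2) by auto
        then show ?thesis using ys by simp
      qed
    qed
  qed
  have kmon: "\<not> (\<exists>xs. is_violation P k g xs)"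
  proof (rule notI)
    assume "\<exists>xs. is_violation P k g xs"
    then obtain xs where xs: "is_violation P k g xs" by blast
    have "i \<le> k \<Longrightarrow> i + 1 \<le> a (xs ! i)" for i
    proof (induction i)
      case 0
      then show ?case using xs unfolding is_violation_def g_def by (cases "a (xs!0)") auto
    next
      case (Suc i)
      then have ih: "i + 1 \<le> a (xs ! i)" by simp
      have "xs ! i < xs ! Suc i" using xs Suc.prems unfolding is_violation_def
        by (simp add: sorted_wrt_iff_nth_less)
      then have le: "a (xs ! i) \<le> a (xs ! Suc i)" using amono by simp
      have "g (xs ! i) \<noteq> g (xs ! Suc i)" using xs Suc.prems unfolding is_violation_def by simp
      then have "a (xs ! i) \<noteq> a (xs ! Suc i)" by (auto simp: g_def)
      then show ?case using ih le by simp
    qed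
    then have "k + 1 \<le> a (xs ! k)" by simp
    with bound[of "xs ! k"] show False by simp
  qed
  show ?thesis using kmon agree unfolding k_monotone_def by blast
qed

theorem theoremB5:
  fixes P :: "'a::order set" and f :: "'a \<Rightarrow> bool" and k :: nat and \<epsilon> :: real
  assumes "finite P"
    and "eps_far P k \<epsilon> f"
  shows "\<exists>M. is_matching (violation_edges P k f) M \<and> finite M \<and>
             (\<forall>e\<in>M. card e = k + 1) \<and>
             real (card M) \<ge> \<epsilon> * real (card P) / real (k + 1)"
proof -
  define E where "E = violation_edges P k f"
  have EP: "E \<subseteq> Pow P" unfolding E_def violation_edges_def is_violation_def by auto
  have finE: "finite E" using EP assms(1) by (meson finite_Pow_iff finite_subset)
  have cardE: "card e = k + 1" if eE: "e \<in> E" for e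
  proof -
    obtain xs where "is_violation P k f xs" "e = set xs" using eE unfolding E_def violation_edges_def by blast
    then show ?thesis using sw_distinct unfolding is_violation_def by (metis distinct_card)
  qed
  define Ms where "Ms = {M. is_matching E M}"
  have "Ms \<subseteq> Pow E" unfolding Ms_def is_matching_def by blast
  then have finMs: "finite Ms" using finE by (meson finite_Pow_iff finite_subset)
  have "{} \<in> Ms" unfolding Ms_def is_matching_def by (simp add: disjoint_def)
  then have "Max (card ` Ms) \<in> card ` Ms" using finMs by (intro Max_in) auto
  then obtain M where M: "M \<in> Ms" "card M = Max (card ` Ms)" by auto
  have maxM: "card M' \<le> card M" if "M' \<in> Ms" for M'
    using M finMs that by simp
  have ME: "M \<subseteq> E" and dM: "disjoint M" using M unfolding Ms_def is_matching_def by auto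
  have finM: "finite M" using ME finE finite_subset by blast
  define S where "S = P - \<Union>M"
  have noviol: "\<not> set xs \<subseteq> S" if xs: "is_violation P k f xs" for xs
  proof
    assume sub: "set xs \<subseteq> S"
    have eE: "set xs \<in> E" using xs unfolding E_def violation_edges_def by blast
    have ne: "set xs \<noteq> {}" using xs unfolding is_violation_def by auto
    have notin: "set xs \<notin> M" using aux_notin[OF sub[unfolded S_def] ne] .
    have "insert (set xs) M \<in> Ms" unfolding Ms_def is_matching_def
    proof (intro CollectI conjI)
      show "insert (set xs) M \<subseteq> E" using ME eE by blast
      show "disjoint (insert (set xs) M)" using dM sub unfolding disjoint_def S_def by blast
    qed
    then have "card (insert (set xs) M) \<le> card M" by (rule maxM)
    then show False using notin finM by simp
  qed
  obtain g where g: "k_monotone P k g" "\<forall>x\<in>S. g x = f x"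
    using extension[of S P k f] noviol assms(1) unfolding S_def by blast
  have D: "{x\<in>P. f x \<noteq> g x} \<subseteq> \<Union>M" using g(2) unfolding S_def by auto
  have finU: "finite (\<Union>M)" using finM ME EP assms(1)
    by (meson Sup_le_iff PowD finite_subset subsetD)
  have "card {x\<in>P. f x \<noteq> g x} \<le> card (\<Union>M)" using D finU by (rule card_mono[rotated])
  also have "\<dots> \<le> sum card M" by (rule card_Union_le_sum_card)
  also have "\<dots> = (k + 1) * card M" using ME cardE by (simp add: subset_iff)
  finally have cD: "card {x\<in>P. f x \<noteq> g x} \<le> (k + 1) * card M" .
  have epsle: "\<epsilon> \<le> real (card {x\<in>P. f x \<noteq> g x}) / real (card P)"
    using assms(2) g(1) unfolding eps_far_def by blast
  have "\<epsilon> * real (card P) / real (k + 1) \<le> real (card M)"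
  proof (cases "card P = 0")
    case True then show ?thesis by simp
  next
    case False
    then have cp: "real (card P) > 0" by simp
    have "\<epsilon> * real (card P) \<le> real (card {x\<in>P. f x \<noteq> g x})"
      using epsle cp by (simp add: pos_le_divide_eq)
    also have "\<dots> \<le> real (k + 1) * real (card M)" using cD by (metis of_nat_le_iff of_nat_mult)
    finally show ?thesis by (simp add: divide_le_eq mult.commute)
  qed
  moreover have "is_matching (violation_edges P k f) M" using M unfolding E_def Ms_def by simp
  moreover have "\<forall>e\<in>M. card e = k + 1" using ME cardE by blast
  ultimately show ?thesis using finM by blast
qed

end
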